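(* Let $S=s_1,\ldots,s_n$ be a sequence of positive real numbers, let $\alpha>1$, $\gamma>0$, let $k$ be a positive integer and $\epsilon>0$. Let $(L^*,\beta^* )$ be an optimal solution of $\textsc{Exp}(\alpha)$ for $S,\alpha,\gamma,k$, and let $g=(\prod_{i=1}^n s_i)^{1/n}$. Let $(L,\beta)$ be the output of $\textit{ExpAlpha}(S,\alpha,\gamma,k,\epsilon)$. Then \[ \mathrm{score}_{\exp}(L,S;\alpha,\beta,\gamma)-n\log g\le(1+\epsilon)\big(\mathrm{score}_{\exp}(L^*,S;\alpha,\beta^*,\gamma)-n\log g\big). \] Moreover, if $g\ge1$, then $\mathrm{score}_{\exp}(L,S;\alpha,\beta,\gamma)\le(1+\epsilon)\,\mathrm{score}_{\exp}(L^*,S;\alpha,\beta^*,\gamma)$.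
   Context: A level sequence is $L=\ell_1,\ldots,\ell_n$ of integers with $0\le\ell_i\le k$; set $\ell_0=0$. The penalty is $\mathrm{pen}(x,y)=\max(y-x,0)\,\gamma\log n$. The exponential density is $p_{\exp}(s;\lambda)=\lambda e^{-\lambda s}$. For $\alpha\ge1$, $\beta>0$: $\mathrm{score}_{\exp}(L,S;\alpha,\beta,\gamma)=\sum_{i=1}^n\big[-\log p_{\exp}(s_i;\beta\alpha^{\ell_i})+\mathrm{pen}(\ell_{i-1},\ell_i)\big]$. Problem $\textsc{Exp}(\alpha)$: given $S,\alpha,\gamma,k$, find $L$ and $\beta>0$ minimizing this score. $\textit{Viterbi}(S,\alpha,\beta,\gamma,k,p_{\exp})$ returns a level sequence minimizing the score for fixed $\alpha,\beta$. Algorithm $\textit{ExpAlpha}(S,\alpha,\gamma,k,\epsilon)$: let $\mu=\frac1n\sum_i s_i$ and $\beta=1/\mu$; while $\beta\ge1/(\alpha^k\mu)$: run $L=\textit{Viterbi}(S,\alpha,\beta,\gamma,k,p_{\exp})$ and set $\beta\leftarrow\beta/(1+\epsilon)$. Return the tested pair $(L,\beta)$ with the smallest score. *)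

theory Defs
  imports Complex_Main
begin

(* Sequences S = s_1..s_n and level sequences L = l_1..l_n are functions on nat,
   only indices 1..n matter.  The convention l_0 = 0 is built into prev_level. *)

definition pen :: "nat \<Rightarrow> real \<Rightarrow> nat \<Rightarrow> nat \<Rightarrow> real" where
  "pen n \<gamma> x y = max (real y - real x) 0 * \<gamma> * ln (real n)"

definition p_exp :: "real \<Rightarrow> real \<Rightarrow> real" where
  "p_exp s lam = lam * exp (- lam * s)"

definition prev_level :: "(nat \<Rightarrow> nat) \<Rightarrow> nat \<Rightarrow> nat" where
  "prev_level L i = (if i = 1 then 0 else L (i - 1))"

definition score_exp ::
  "nat \<Rightarrow> (nat \<Rightarrow> nat) \<Rightarrow> (nat \<Rightarrow> real) \<Rightarrow> real \<Rightarrow> real \<Rightarrow> real \<Rightarrow> real" where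
  "score_exp n L s \<alpha> \<beta> \<gamma> =
     (\<Sum>i = 1..n. - ln (p_exp (s i) (\<beta> * \<alpha> ^ L i)) + pen n \<gamma> (prev_level L i) (L i))"

definition is_level_seq :: "nat \<Rightarrow> nat \<Rightarrow> (nat \<Rightarrow> nat) \<Rightarrow> bool" where
  "is_level_seq n k L \<longleftrightarrow> (\<forall>i\<in>{1..n}. L i \<le> k)"

definition exp_opt ::
  "nat \<Rightarrow> (nat \<Rightarrow> real) \<Rightarrow> real \<Rightarrow> real \<Rightarrow> nat \<Rightarrow> (nat \<Rightarrow> nat) \<Rightarrow> real \<Rightarrow> bool" where
  "exp_opt n s \<alpha> \<gamma> k L \<beta> \<longleftrightarrow>
     is_level_seq n k L \<and> \<beta> > 0 \<and>
     (\<forall>L' \<beta>'. is_level_seq n k L' \<longrightarrow> \<beta>' > 0 \<longrightarrow>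
        score_exp n L s \<alpha> \<beta> \<gamma> \<le> score_exp n L' s \<alpha> \<beta>' \<gamma>)"

definition viterbi_out ::
  "nat \<Rightarrow> (nat \<Rightarrow> real) \<Rightarrow> real \<Rightarrow> real \<Rightarrow> real \<Rightarrow> nat \<Rightarrow> (nat \<Rightarrow> nat) \<Rightarrow> bool" where
  "viterbi_out n s \<alpha> \<beta> \<gamma> k L \<longleftrightarrow>
     is_level_seq n k L \<and>
     (\<forall>L'. is_level_seq n k L' \<longrightarrow> score_exp n L s \<alpha> \<beta> \<gamma> \<le> score_exp n L' s \<alpha> \<beta> \<gamma>)"

definition mean_seq :: "nat \<Rightarrow> (nat \<Rightarrow> real) \<Rightarrow> real" where
  "mean_seq n s = (\<Sum>i = 1..n. s i) / real n"

definition beta_iter :: "nat \<Rightarrow> (nat \<Rightarrow> real) \<Rightarrow> real \<Rightarrow> nat \<Rightarrow> real" where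
  "beta_iter n s \<epsilon> j = (1 / mean_seq n s) / (1 + \<epsilon>) ^ j"

(* j-th iteration is executed (loop condition beta >= 1/(alpha^k mu)); the set of
   such j is downward closed, so these are exactly the iterations performed *)
definition tested :: "nat \<Rightarrow> (nat \<Rightarrow> real) \<Rightarrow> real \<Rightarrow> nat \<Rightarrow> real \<Rightarrow> nat set" where
  "tested n s \<alpha> k \<epsilon> = {j. beta_iter n s \<epsilon> j \<ge> 1 / (\<alpha> ^ k * mean_seq n s)}"

(* (L, beta) is a possible output of ExpAlpha(S, alpha, gamma, k, eps): for each
   tested beta_j, Viterbi returns some optimal level sequence V j, and the returned
   pair is a tested pair of smallest score (any choice among ties). *)
definition exp_alpha_out ::
  "nat \<Rightarrow> (nat \<Rightarrow> real) \<Rightarrow> real \<Rightarrow> real \<Rightarrow> nat \<Rightarrow> real \<Rightarrow> (nat \<Rightarrow> nat) \<Rightarrow> real \<Rightarrow> bool" where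
  "exp_alpha_out n s \<alpha> \<gamma> k \<epsilon> L \<beta> \<longleftrightarrow>
     (\<exists>V :: nat \<Rightarrow> nat \<Rightarrow> nat.
        (\<forall>j\<in>tested n s \<alpha> k \<epsilon>. viterbi_out n s \<alpha> (beta_iter n s \<epsilon> j) \<gamma> k (V j)) \<and>
        (\<exists>j\<in>tested n s \<alpha> k \<epsilon>. L = V j \<and> \<beta> = beta_iter n s \<epsilon> j \<and>
           (\<forall>j'\<in>tested n s \<alpha> k \<epsilon>.
              score_exp n (V j) s \<alpha> (beta_iter n s \<epsilon> j) \<gamma>
              \<le> score_exp n (V j') s \<alpha> (beta_iter n s \<epsilon> j') \<gamma>)))"

end

theory Submission
  imports Defs
begin

lemma neg_ln_p_exp:
  assumes "lam > 0"
  shows "- ln (p_exp x lam) = - ln lam + lam * x"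
  using assms by (simp add: p_exp_def ln_mult)

lemma pen_nonneg:
  assumes "n \<ge> 1" "\<gamma> > 0"
  shows "pen n \<gamma> x y \<ge> 0"
  using assms unfolding pen_def by simp

lemma score_decomp:
  assumes "\<alpha> > 0" "\<beta> > 0"
  shows "score_exp n L s \<alpha> \<beta> \<gamma> = - real n * ln \<beta> + \<beta> * (\<Sum>i = 1..n. \<alpha> ^ L i * s i)
     + (\<Sum>i = 1..n. - real (L i) * ln \<alpha> + pen n \<gamma> (prev_level L i) (L i))"
proof -
  have "score_exp n L s \<alpha> \<beta> \<gamma> = (\<Sum>i = 1..n. - ln \<beta> + \<beta> * (\<alpha> ^ L i * s i)
     + (- real (L i) * ln \<alpha> + pen n \<gamma> (prev_level L i) (L i)))"
    unfolding score_exp_def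
  proof (rule sum.cong)
    fix i
    have "\<beta> * \<alpha> ^ L i > 0" using assms by simp
    then show "- ln (p_exp (s i) (\<beta> * \<alpha> ^ L i)) + pen n \<gamma> (prev_level L i) (L i) =
      - ln \<beta> + \<beta> * (\<alpha> ^ L i * s i) + (- real (L i) * ln \<alpha> + pen n \<gamma> (prev_level L i) (L i))"
      using assms by (simp add: neg_ln_p_exp ln_mult ln_realpow)
  qed simp
  also have "\<dots> = - real n * ln \<beta> + \<beta> * (\<Sum>i = 1..n. \<alpha> ^ L i * s i)
     + (\<Sum>i = 1..n. - real (L i) * ln \<alpha> + pen n \<gamma> (prev_level L i) (L i))"
    by (simp add: sum.distrib sum_distrib_left sum_subtractf)
  finally show ?thesis .
qed

lemma score_lower:
  assumes "n \<ge> 1" "\<gamma> > 0" "\<alpha> > 0" "\<beta> > 0" "\<forall>i\<in>{1..n}. s i > 0"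
  shows "score_exp n L s \<alpha> \<beta> \<gamma> \<ge> real n + (\<Sum>i = 1..n. ln (s i))"
proof -
  have "(\<Sum>i = 1..n. 1 + ln (s i)) \<le> score_exp n L s \<alpha> \<beta> \<gamma>"
    unfolding score_exp_def
  proof (rule sum_mono)
    fix i assume i: "i \<in> {1..n}"
    define lam where "lam = \<beta> * \<alpha> ^ L i"
    have lp: "lam > 0" using assms unfolding lam_def by simp
    have sp: "s i > 0" using assms i by auto
    have "ln (lam * s i) \<le> lam * s i - 1" using lp sp by (intro ln_le_minus_one) simp
    then have "1 + ln (s i) \<le> - ln lam + lam * s i" using lp sp by (simp add: ln_mult)
    moreover have "pen n \<gamma> (prev_level L i) (L i) \<ge> 0" using assms pen_nonneg by blast
    ultimately show "1 + ln (s i) \<le> - ln (p_exp (s i) (\<beta> * \<alpha> ^ L i)) + pen n \<gamma> (prev_level L i) (L i)"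
      using lp by (simp add: neg_ln_p_exp lam_def)
  qed
  then show ?thesis by (simp add: sum.distrib)
qed

theorem proposition6:
  fixes n k :: nat and s :: "nat \<Rightarrow> real" and \<alpha> \<gamma> \<epsilon> :: real
    and Lstar L :: "nat \<Rightarrow> nat" and \<beta>star \<beta> :: real
  assumes "n \<ge> 1"
    and "\<forall>i\<in>{1..n}. s i > 0"
    and "\<alpha> > 1" and "\<gamma> > 0" and "k \<ge> 1" and "\<epsilon> > 0"
    and "exp_opt n s \<alpha> \<gamma> k Lstar \<beta>star"
    and "exp_alpha_out n s \<alpha> \<gamma> k \<epsilon> L \<beta>"
  defines "g \<equiv> (\<Prod>i = 1..n. s i) powr (1 / real n)"
  shows "score_exp n L s \<alpha> \<beta> \<gamma> - real n * ln g
           \<le> (1 + \<epsilon>) * (score_exp n Lstar s \<alpha> \<beta>star \<gamma> - real n * ln g)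
         \<and> (g \<ge> 1 \<longrightarrow> score_exp n L s \<alpha> \<beta> \<gamma> \<le> (1 + \<epsilon>) * score_exp n Lstar s \<alpha> \<beta>star \<gamma>)"
proof -
  note n1 = assms(1) and spos = assms(2) and a1 = assms(3) and g0 = assms(4) and e0 = assms(6)
  have lev: "is_level_seq n k Lstar" and bs0: "\<beta>star > 0"
    using assms(7) unfolding exp_opt_def by auto
  obtain V where V: "\<forall>j\<in>tested n s \<alpha> k \<epsilon>. viterbi_out n s \<alpha> (beta_iter n s \<epsilon> j) \<gamma> k (V j)"
    and j0: "\<exists>j\<in>tested n s \<alpha> k \<epsilon>. L = V j \<and> \<beta> = beta_iter n s \<epsilon> j \<and>
           (\<forall>j'\<in>tested n s \<alpha> k \<epsilon>.
              score_exp n (V j) s \<alpha> (beta_iter n s \<epsilon> j) \<gamma>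
              \<le> score_exp n (V j') s \<alpha> (beta_iter n s \<epsilon> j') \<gamma>)"
    using assms(8) unfolding exp_alpha_out_def by blast
  define Ss where "Ss = (\<Sum>i = 1..n. s i)"
  define T where "T = (\<Sum>i = 1..n. \<alpha> ^ Lstar i * s i)"
  define C where "C = (\<Sum>i = 1..n. - real (Lstar i) * ln \<alpha> + pen n \<gamma> (prev_level Lstar i) (Lstar i))"
  define Sst where "Sst = score_exp n Lstar s \<alpha> \<beta>star \<gamma>"
  have Ss0: "Ss > 0" unfolding Ss_def using n1 spos by (intro sum_pos) auto
  have "Ss \<le> T" unfolding Ss_def T_def
    using spos a1 by (intro sum_mono) (force simp: mult_le_cancel_right1)
  have "T \<le> \<alpha> ^ k * Ss" unfolding Ss_def T_def sum_distrib_left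
  proof (intro sum_mono)
    fix i assume i: "i \<in> {1..n}"
    have "\<alpha> ^ Lstar i \<le> \<alpha> ^ k" using lev i a1 unfolding is_level_seq_def
      by (intro power_increasing) auto
    moreover have "s i > 0" using spos i by blast
    ultimately show "\<alpha> ^ Lstar i * s i \<le> \<alpha> ^ k * s i" by (intro mult_right_mono) auto
  qed
  have T0: "T > 0" using \<open>Ss \<le> T\<close> Ss0 by simp
  have bi: "beta_iter n s \<epsilon> j = real n / (Ss * (1 + \<epsilon>) ^ j)" for j
    unfolding beta_iter_def mean_seq_def Ss_def by simp
  have tested_iff: "j \<in> tested n s \<alpha> k \<epsilon> \<longleftrightarrow> real n / (Ss * (1 + \<epsilon>) ^ j) \<ge> real n / (\<alpha> ^ k * Ss)" for j
    unfolding tested_def bi unfolding mean_seq_def Ss_def by simp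
  define r where "r = T / Ss"
  have r1: "r \<ge> 1" unfolding r_def using \<open>Ss \<le> T\<close> Ss0 by simp
  obtain m where "r < (1 + \<epsilon>) ^ m" using real_arch_pow[of "1 + \<epsilon>" r] e0 by auto
  define m0 where "m0 = (LEAST m. r < (1 + \<epsilon>) ^ m)"
  have m0: "r < (1 + \<epsilon>) ^ m0" unfolding m0_def by (rule LeastI) fact
  have "m0 \<noteq> 0" using m0 r1 by (cases m0) auto
  define j where "j = m0 - 1"
  have jm: "Suc j = m0" unfolding j_def using \<open>m0 \<noteq> 0\<close> by simp
  have "\<not> r < (1 + \<epsilon>) ^ j" unfolding j_def m0_def
    using \<open>m0 \<noteq> 0\<close> not_less_Least[of j "\<lambda>m. r < (1 + \<epsilon>) ^ m"] j_def m0_def by auto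
  then have rj: "(1 + \<epsilon>) ^ j \<le> r" by simp
  have rj2: "r < (1 + \<epsilon>) * (1 + \<epsilon>) ^ j" using m0 jm by auto
  have pj: "(1 + \<epsilon>) ^ j > 0" using e0 by simp
  define x where "x = r / (1 + \<epsilon>) ^ j"
  have x1: "x \<ge> 1" unfolding x_def using rj pj by simp
  have x2: "x \<le> 1 + \<epsilon>" unfolding x_def using rj2 pj by (simp add: divide_le_eq mult.commute)
  have bjT: "beta_iter n s \<epsilon> j * T = real n * x"
    unfolding bi x_def r_def using Ss0 by simp
  have bjpos: "beta_iter n s \<epsilon> j > 0" unfolding bi using n1 Ss0 pj by simp
  have "j \<in> tested n s \<alpha> k \<epsilon>"
  proof -
    have "Ss * (1 + \<epsilon>) ^ j \<le> T" using rj Ss0 unfolding r_def by (simp add: le_divide_eq mult.commute)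
    also have "\<dots> \<le> \<alpha> ^ k * Ss" by fact
    finally show ?thesis unfolding tested_iff using n1 Ss0 pj
      by (intro divide_left_mono) auto
  qed
  define bj where "bj = beta_iter n s \<epsilon> j"
  define y where "y = \<beta>star * T / real n"
  have y0: "y > 0" unfolding y_def using bs0 T0 n1 by simp
  have a0: "\<alpha> > 0" using a1 by simp
  have lnbj: "ln bj = ln x + ln (real n) - ln T"
  proof -
    have "bj = x * real n / T" unfolding bj_def using bjT T0 by (simp add: field_simps)
    then show ?thesis using x1 n1 T0 by (simp add: ln_mult ln_div)
  qed
  have lnbs: "ln \<beta>star = ln y + ln (real n) - ln T"
  proof -
    have "\<beta>star = y * real n / T" unfolding y_def using T0 n1 by (simp add: field_simps)
    then show ?thesis using y0 n1 T0 by (simp add: ln_mult ln_div)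
  qed
  have s1: "score_exp n Lstar s \<alpha> bj \<gamma> = - real n * ln bj + real n * x + C"
    using score_decomp[OF a0 bjpos, of n Lstar s \<gamma>] bjT unfolding bj_def T_def C_def by simp
  have s2: "Sst = - real n * ln \<beta>star + real n * y + C"
    using score_decomp[OF a0 bs0, of n Lstar s \<gamma>] unfolding Sst_def y_def T_def C_def using n1 by simp
  have "ln x \<ge> 0" using x1 by simp
  have "ln y \<le> y - 1" using y0 by (rule ln_le_minus_one)
  have diff: "score_exp n Lstar s \<alpha> bj \<gamma> \<le> Sst + real n * \<epsilon>"
  proof -
    have "score_exp n Lstar s \<alpha> bj \<gamma> - Sst = real n * ((x - ln x) - (y - ln y))"
      unfolding s1 s2 lnbj lnbs by (simp add: algebra_simps)
    also have "\<dots> \<le> real n * \<epsilon>" using \<open>ln x \<ge> 0\<close> \<open>ln y \<le> y - 1\<close> x2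
      by (intro mult_left_mono) auto
    finally show ?thesis by simp
  qed
  obtain j1 where j1: "j1 \<in> tested n s \<alpha> k \<epsilon>" "L = V j1" "\<beta> = beta_iter n s \<epsilon> j1"
    "\<forall>j'\<in>tested n s \<alpha> k \<epsilon>. score_exp n (V j1) s \<alpha> (beta_iter n s \<epsilon> j1) \<gamma>
              \<le> score_exp n (V j') s \<alpha> (beta_iter n s \<epsilon> j') \<gamma>" using j0 by blast
  have "score_exp n L s \<alpha> \<beta> \<gamma> \<le> score_exp n (V j) s \<alpha> bj \<gamma>"
    using j1 \<open>j \<in> tested n s \<alpha> k \<epsilon>\<close> unfolding bj_def by auto
  also have "\<dots> \<le> score_exp n Lstar s \<alpha> bj \<gamma>"
    using V \<open>j \<in> tested n s \<alpha> k \<epsilon>\<close> lev unfolding viterbi_out_def bj_def by blast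
  finally have main: "score_exp n L s \<alpha> \<beta> \<gamma> \<le> Sst + real n * \<epsilon>" using diff by simp
  have lng: "real n * ln g = (\<Sum>i = 1..n. ln (s i))"
  proof -
    have "ln (\<Prod>i = 1..n. s i) = (\<Sum>i = 1..n. ln (s i))"
    proof (rule ln_prod)
      fix i assume "i \<in> {1..n}"
      then have "s i > 0" using spos by blast
      then show "s i \<noteq> 0" by simp
    qed simp
    then show ?thesis unfolding g_def using n1 by simp
  qed
  have low: "Sst - real n * ln g \<ge> real n"
    using score_lower[OF n1 g0 a0 bs0 spos, of Lstar] lng unfolding Sst_def by simp
  have "real n * \<epsilon> \<le> \<epsilon> * (Sst - real n * ln g)"
    using low e0 by (simp add: mult.commute mult_left_mono)
  then have part1: "score_exp n L s \<alpha> \<beta> \<gamma> - real n * ln g \<le> (1 + \<epsilon>) * (Sst - real n * ln g)"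
    using main by (simp add: algebra_simps)
  moreover have "g \<ge> 1 \<longrightarrow> score_exp n L s \<alpha> \<beta> \<gamma> \<le> (1 + \<epsilon>) * Sst"
  proof
    assume "g \<ge> 1"
    then have "ln g \<ge> 0" by simp
    then have "\<epsilon> * (real n * ln g) \<ge> 0" using e0 by simp
    then show "score_exp n L s \<alpha> \<beta> \<gamma> \<le> (1 + \<epsilon>) * Sst" using part1 by (simp add: algebra_simps)
  qed
  ultimately show ?thesis unfolding Sst_def by blast
qed

end
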